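(* For any metric space $(X,d)$, the collection $\{\vec B_r(S): S\in\mathrm{K}(X),\ r\ge0\}$ is a basis for a topology on $\mathrm{K}(X)$.
   Context: $\mathrm{K}(X)$ is the set of non-empty $d$-compact subsets of $X$. For $S,S'\in\mathrm{K}(X)$, the one-sided Hausdorff distance is $\vec d(S,S'):=\max_{x\in S}\min_{x'\in S'}d(x,x')$, and $\vec B_r(S):=\{S'\in\mathrm{K}(X):\vec d(S',S)<r\}$. *)

theory Defs
  imports "HOL-Analysis.Analysis"
begin

text \<open>K(X): the non-empty compact subsets of the metric space X (here the whole type).\<close>
definition Kset :: "('a::metric_space) set set" where
  "Kset = {S. S \<noteq> {} \<and> compact S}"

text \<open>One-sided Hausdorff distance: max over x in S of min over x' in S' of d(x,x').
  For non-empty compact S, S' the SUP/INF are attained, i.e. they are max/min.\<close>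
definition hdist_dir :: "('a::metric_space) set \<Rightarrow> 'a set \<Rightarrow> real" where
  "hdist_dir S S' = (SUP x\<in>S. INF x'\<in>S'. dist x x')"

definition Bvec :: "real \<Rightarrow> ('a::metric_space) set \<Rightarrow> 'a set set" where
  "Bvec r S = {S' \<in> Kset. hdist_dir S' S < r}"

end

theory Submission
  imports Defs
begin

lemma hd_eq: "S' \<noteq> {} \<Longrightarrow> hdist_dir S S' = (SUP x\<in>S. infdist x S')"
  unfolding hdist_dir_def infdist_def by simp

lemma hd_bdd: "compact (S::'a::metric_space set) \<Longrightarrow> bdd_above ((\<lambda>x. infdist x S') ` S)"
  by (intro bounded_imp_bdd_above compact_imp_bounded compact_continuous_image
      continuous_on_infdist continuous_on_id)

lemma hd_upper: "S \<in> Kset \<Longrightarrow> S' \<in> Kset \<Longrightarrow> x \<in> S \<Longrightarrow> infdist x S' \<le> hdist_dir S S'"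
  unfolding Kset_def using hd_eq[of S' S] hd_bdd[of S S']
  by (auto intro: cSUP_upper)

lemma hd_self: "S \<in> Kset \<Longrightarrow> hdist_dir S S \<le> 0"
proof -
  assume S: "S \<in> Kset"
  then have ne: "S \<noteq> {}" unfolding Kset_def by auto
  show ?thesis unfolding hd_eq[OF ne]
    by (rule cSUP_least[OF ne]) simp
qed

lemma hd_tri:
  assumes A: "A \<in> Kset" and B: "B \<in> Kset" and C: "C \<in> Kset"
  shows "hdist_dir A C \<le> hdist_dir A B + hdist_dir B C"
proof -
  have neA: "A \<noteq> {}" and neB: "B \<noteq> {}" and neC: "C \<noteq> {}"
    using A B C unfolding Kset_def by auto
  have "(SUP x\<in>A. infdist x C) \<le> hdist_dir A B + hdist_dir B C"
  proof (rule cSUP_least[OF neA])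
    fix x assume x: "x \<in> A"
    have "infdist x C - hdist_dir B C \<le> infdist x B"
      unfolding infdist_def[of x B] using neB
    proof (simp only: if_False, intro cINF_greatest[OF neB])
      fix b assume b: "b \<in> B"
      have "infdist x C \<le> infdist b C + dist x b" by (rule infdist_triangle)
      moreover have "infdist b C \<le> hdist_dir B C" using hd_upper[OF B C b] .
      ultimately show "infdist x C - hdist_dir B C \<le> dist x b"
        by simp
    qed
    moreover have "infdist x B \<le> hdist_dir A B" using hd_upper[OF A B x] .
    ultimately show "infdist x C \<le> hdist_dir A B + hdist_dir B C" by simp
  qed
  then show ?thesis unfolding hd_eq[OF neC] .
qed

lemma basis_int:
  assumes "P = (\<lambda>U. U \<in> {Bvec r S | S r. S \<in> Kset \<and> r \<ge> 0})"
  shows "istopology (arbitrary union_of P)"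
  unfolding istopology_base_eq
proof (intro allI impI)
  fix U V assume "P U \<and> P V"
  then obtain S1 r1 S2 r2 where U: "U = Bvec r1 S1" "S1 \<in> Kset"
    and V: "V = Bvec r2 S2" "S2 \<in> Kset" using assms by auto
  have "U \<inter> V = \<Union>{W. P W \<and> W \<subseteq> U \<inter> V}"
  proof (rule set_eqI, rule iffI)
    fix T assume T: "T \<in> U \<inter> V"
    then have TK: "T \<in> Kset" and h1: "hdist_dir T S1 < r1" and h2: "hdist_dir T S2 < r2"
      using U V unfolding Bvec_def by auto
    define e where "e = min (r1 - hdist_dir T S1) (r2 - hdist_dir T S2)"
    have e: "e > 0" using h1 h2 unfolding e_def by auto
    have sub: "Bvec e T \<subseteq> U \<inter> V"
    proof
      fix R assume "R \<in> Bvec e T"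
      then have R: "R \<in> Kset" "hdist_dir R T < e" unfolding Bvec_def by auto
      have "hdist_dir R S1 \<le> hdist_dir R T + hdist_dir T S1" by (rule hd_tri[OF R(1) TK U(2)])
      moreover have "hdist_dir R S2 \<le> hdist_dir R T + hdist_dir T S2" by (rule hd_tri[OF R(1) TK V(2)])
      ultimately show "R \<in> U \<inter> V" using R U V unfolding Bvec_def e_def by auto
    qed
    have "T \<in> Bvec e T" using hd_self[OF TK] e TK unfolding Bvec_def by auto
    moreover have "P (Bvec e T)" using assms TK e by (auto intro!: exI[of _ T] exI[of _ e])
    ultimately show "T \<in> \<Union>{W. P W \<and> W \<subseteq> U \<inter> V}" using sub by blast
  qed blast
  then show "(arbitrary union_of P) (U \<inter> V)"
    unfolding union_of_def arbitrary_def by (intro exI[of _ "{W. P W \<and> W \<subseteq> U \<inter> V}"]) auto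
qed

theorem lemma3p12:
  shows "\<exists>T :: ('a::metric_space) set topology.
           topspace T = Kset \<and>
           (\<forall>U. openin T U \<longleftrightarrow>
                (\<exists>\<U>. \<U> \<subseteq> {Bvec r S | S r. S \<in> Kset \<and> r \<ge> 0} \<and> U = \<Union>\<U>))"
proof -
  define P where "P = (\<lambda>U::'a set set. U \<in> {Bvec r S | S r. S \<in> Kset \<and> r \<ge> 0})"
  define T where "T = topology (arbitrary union_of P)"
  have op: "openin T = arbitrary union_of P"
    unfolding T_def using basis_int[OF P_def] by (simp add: topology_inverse')
  have opU: "openin T U \<longleftrightarrow> (\<exists>\<U>. \<U> \<subseteq> {Bvec r S | S r. S \<in> Kset \<and> r \<ge> 0} \<and> U = \<Union>\<U>)" for U
    unfolding op union_of_def arbitrary_def P_def by (auto simp: Collect_mem_eq)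
  have "topspace T = Kset"
  proof
    show "topspace T \<subseteq> Kset"
      unfolding topspace_def using opU by (auto simp: Bvec_def)
    show "Kset \<subseteq> topspace T"
    proof
      fix S :: "'a set" assume S: "S \<in> Kset"
      have "openin T (Bvec 1 S)"
        by (rule iffD2[OF opU], rule exI[of _ "{Bvec 1 S}"]) (use S in \<open>auto intro!: exI[of _ S] exI[of _ "1::real"]\<close>)
      moreover have "S \<in> Bvec 1 S" using hd_self[OF S] S unfolding Bvec_def by auto
      ultimately show "S \<in> topspace T" using openin_subset by blast
    qed
  qed
  then show ?thesis using opU by blast
qed

end
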